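(* Let $m\ge 1$, let $S=\{1,\dots,m\}$, and let $\phi:S\times S\to\{+1,-1\}$ be any symmetric function. Then there exist an integer $n\le 2m$ and a map $\sigma:S\to\mathbb{Z}_2^n$, $i\mapsto\sigma_i$, such that for all $i,j\in S$, $$\phi(i,j)=(-1)^{\langle\sigma_i,\sigma_j\rangle_n},$$ where $\langle(i_1,\dots,i_n),(j_1,\dots,j_n)\rangle_n=i_1j_1+\dots+i_nj_n$ (computed mod $2$) is the standard `scalar product' on $\mathbb{Z}_2^n$.
   Context: The function $\phi$ is thought of as a sign rule $y^iy^j=\phi(i,j)y^jy^i$ for generators $y^1,\dots,y^m$ of an associative algebra; the theorem says every such sign rule is of $\mathbb{Z}_2^n$-commutative type for some $n\le 2m$. *)

theory Defs
  imports Main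
begin

text \<open>Vectors in Z_2^n are represented as functions v :: nat => nat with v k in {0,1}
  for k < n (components indexed 0..n-1). The standard scalar product is computed mod 2.\<close>

definition is_Z2_vec :: "nat \<Rightarrow> (nat \<Rightarrow> nat) \<Rightarrow> bool" where
  "is_Z2_vec n v \<longleftrightarrow> (\<forall>k<n. v k \<in> {0, 1})"

definition Z2_scalar :: "nat \<Rightarrow> (nat \<Rightarrow> nat) \<Rightarrow> (nat \<Rightarrow> nat) \<Rightarrow> nat" where
  "Z2_scalar n v w = (\<Sum>k<n. v k * w k) mod 2"

end

theory Submission
  imports Defs
begin

lemma main:
  "\<forall>a::nat\<Rightarrow>nat\<Rightarrow>nat. (\<forall>i\<in>{1..m}. \<forall>j\<in>{1..m}. a i j = a j i) \<longrightarrow>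
    (\<exists>\<sigma>::nat\<Rightarrow>nat\<Rightarrow>nat. (\<forall>i\<in>{1..m}. \<forall>k. \<sigma> i k \<in> {0,1}) \<and>
      (\<forall>i\<in>{1..m}. \<forall>j\<in>{1..m}. (\<Sum>k<2*m. \<sigma> i k * \<sigma> j k) mod 2 = a i j mod 2))"
proof (induction m)
  case 0
  then show ?case by auto
next
  case (Suc m)
  show ?case
  proof (intro allI impI)
    fix a :: "nat\<Rightarrow>nat\<Rightarrow>nat"
    assume sym: "\<forall>i\<in>{1..Suc m}. \<forall>j\<in>{1..Suc m}. a i j = a j i"
    define t where "t = Suc m"
    define b where "b i j = a i j + a i t * a j t" for i j
    have bs: "\<forall>i\<in>{1..m}. \<forall>j\<in>{1..m}. b i j = b j i"
      using sym by (auto simp: b_def)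
    obtain \<sigma>' where s01: "\<forall>i\<in>{1..m}. \<forall>k. \<sigma>' i k \<in> {0,1}"
      and sg: "\<forall>i\<in>{1..m}. \<forall>j\<in>{1..m}. (\<Sum>k<2*m. \<sigma>' i k * \<sigma>' j k) mod 2 = b i j mod 2"
      using Suc.IH bs by blast
    define \<sigma> where "\<sigma> i k = (if i = t then (if k = 2*m then 1 else if k = 2*m+1 then (1 + a t t) mod 2 else 0)
       else (if k = 2*m then a i t mod 2 else if k = 2*m+1 then 0 else if k < 2*m then \<sigma>' i k else 0))" for i k
    have split: "(\<Sum>k<2*Suc m. \<sigma> i k * \<sigma> j k) = (\<Sum>k<2*m. \<sigma> i k * \<sigma> j k) + \<sigma> i (2*m) * \<sigma> j (2*m)
        + \<sigma> i (2*m+1) * \<sigma> j (2*m+1)" for i j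
    proof -
      have "2*Suc m = Suc (Suc (2*m))" by simp
      then show ?thesis by (simp only: sum.lessThan_Suc) (simp only: Suc_eq_plus1)
    qed
    have low: "(\<Sum>k<2*m. \<sigma> i k * \<sigma> j k) = (if i = t \<or> j = t then 0 else (\<Sum>k<2*m. \<sigma>' i k * \<sigma>' j k))" for i j
      by (auto simp: \<sigma>_def intro!: sum.cong)
    show "\<exists>\<sigma>::nat\<Rightarrow>nat\<Rightarrow>nat. (\<forall>i\<in>{1..Suc m}. \<forall>k. \<sigma> i k \<in> {0,1}) \<and>
      (\<forall>i\<in>{1..Suc m}. \<forall>j\<in>{1..Suc m}. (\<Sum>k<2*Suc m. \<sigma> i k * \<sigma> j k) mod 2 = a i j mod 2)"
    proof (intro exI conjI ballI allI)
      fix i k assume "i \<in> {1..Suc m}"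
      then show "\<sigma> i k \<in> {0,1}" using s01 unfolding \<sigma>_def t_def
        by (auto simp: mod2_eq_if)
    next
      fix i j assume i: "i \<in> {1..Suc m}" and j: "j \<in> {1..Suc m}"
      show "(\<Sum>k<2*Suc m. \<sigma> i k * \<sigma> j k) mod 2 = a i j mod 2"
      proof (cases "i = t")
        case True
        show ?thesis
        proof (cases "j = t")
          case True
          show ?thesis
          proof -
            have "(\<Sum>k<2*Suc m. \<sigma> i k * \<sigma> j k) = 1 + ((1 + a t t) mod 2) * ((1 + a t t) mod 2)"
              unfolding split low using \<open>i = t\<close> True by (simp add: \<sigma>_def)
            moreover have "((1 + a t t) mod 2) * ((1 + a t t) mod 2) = (1 + a t t) mod 2"
              by (cases "(1 + a t t) mod 2 = 0") (simp_all add: not_mod_2_eq_0_eq_1)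
            ultimately have "(\<Sum>k<2*Suc m. \<sigma> i k * \<sigma> j k) = 1 + (1 + a t t) mod 2" by simp
            moreover have "(1 + (1 + a t t) mod 2) mod 2 = a t t mod 2" by (cases "even (a t t)") (simp_all add: odd_iff_mod_2_eq_one)
            ultimately show ?thesis using \<open>i = t\<close> True by (simp only:)
          qed
        next
          case False
          with \<open>i = t\<close> j sym show ?thesis unfolding split low
            by (auto simp: \<sigma>_def t_def)
        qed
      next
        case False
        show ?thesis
        proof (cases "j = t")
          case True
          with \<open>i \<noteq> t\<close> show ?thesis unfolding split low
            by (auto simp: \<sigma>_def t_def)
        next
          case False
          with \<open>i \<noteq> t\<close> i j have im: "i \<in> {1..m}" and jm: "j \<in> {1..m}" by (auto simp: t_def)
          have "(\<Sum>k<2*Suc m. \<sigma> i k * \<sigma> j k) = (\<Sum>k<2*m. \<sigma>' i k * \<sigma>' j k) + (a i t mod 2) * (a j t mod 2)"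
            unfolding split low using \<open>i \<noteq> t\<close> False by (simp add: \<sigma>_def)
          then have "(\<Sum>k<2*Suc m. \<sigma> i k * \<sigma> j k) mod 2 = (b i j + (a i t mod 2) * (a j t mod 2)) mod 2"
          proof -
            assume eq: "(\<Sum>k<2*Suc m. \<sigma> i k * \<sigma> j k) = (\<Sum>k<2*m. \<sigma>' i k * \<sigma>' j k) + (a i t mod 2) * (a j t mod 2)"
            have h: "(\<Sum>k<2*m. \<sigma>' i k * \<sigma>' j k) mod 2 = b i j mod 2" using sg im jm by blast
            have "(\<Sum>k<2*Suc m. \<sigma> i k * \<sigma> j k) mod 2 = ((\<Sum>k<2*m. \<sigma>' i k * \<sigma>' j k) mod 2 + (a i t mod 2) * (a j t mod 2)) mod 2"
              unfolding eq by (rule mod_add_left_eq[symmetric])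
            also have "\<dots> = (b i j mod 2 + (a i t mod 2) * (a j t mod 2)) mod 2" unfolding h ..
            also have "\<dots> = (b i j + (a i t mod 2) * (a j t mod 2)) mod 2" by (rule mod_add_left_eq)
            finally show ?thesis .
          qed
          also have "\<dots> = (a i j + 2 * (a i t * a j t)) mod 2"
          proof -
            have "(b i j + (a i t mod 2) * (a j t mod 2)) mod 2 = (b i j + ((a i t mod 2) * (a j t mod 2)) mod 2) mod 2"
              by (rule mod_add_right_eq[symmetric])
            also have "((a i t mod 2) * (a j t mod 2)) mod 2 = (a i t * a j t) mod 2" by (rule mod_mult_eq)
            also have "(b i j + (a i t * a j t) mod 2) mod 2 = (b i j + a i t * a j t) mod 2"
              by (rule mod_add_right_eq)
            also have "b i j + a i t * a j t = a i j + 2 * (a i t * a j t)" unfolding b_def by simp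
            finally show ?thesis .
          qed
          also have "\<dots> = a i j mod 2" by simp
          finally show ?thesis .
        qed
      qed
    qed
  qed
qed

theorem theorem1:
  fixes m :: nat and \<phi> :: "nat \<Rightarrow> nat \<Rightarrow> int"
  assumes "m \<ge> 1"
    and "\<forall>i\<in>{1..m}. \<forall>j\<in>{1..m}. \<phi> i j \<in> {1, -1}"
    and "\<forall>i\<in>{1..m}. \<forall>j\<in>{1..m}. \<phi> i j = \<phi> j i"
  shows "\<exists>n::nat. n \<le> 2 * m \<and> (\<exists>\<sigma> :: nat \<Rightarrow> nat \<Rightarrow> nat.
           (\<forall>i\<in>{1..m}. is_Z2_vec n (\<sigma> i)) \<and>
           (\<forall>i\<in>{1..m}. \<forall>j\<in>{1..m}. \<phi> i j = (-1) ^ Z2_scalar n (\<sigma> i) (\<sigma> j)))"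
proof -
  define a where "a i j = (if \<phi> i j = 1 then 0 else 1::nat)" for i j
  have "\<forall>i\<in>{1..m}. \<forall>j\<in>{1..m}. a i j = a j i" using assms(3) by (simp add: a_def)
  then obtain \<sigma> where s01: "\<forall>i\<in>{1..m}. \<forall>k. \<sigma> i k \<in> {0,1}"
    and sg: "\<forall>i\<in>{1..m}. \<forall>j\<in>{1..m}. (\<Sum>k<2*m. \<sigma> i k * \<sigma> j k) mod 2 = a i j mod 2"
    using main by blast
  show ?thesis
  proof (intro exI conjI ballI)
    show "2*m \<le> 2*m" by simp
  next
    fix i assume "i \<in> {1..m}" then show "is_Z2_vec (2*m) (\<sigma> i)"
      using s01 by (simp add: is_Z2_vec_def)
  next
    fix i j assume i: "i \<in> {1..m}" and j: "j \<in> {1..m}"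
    have "Z2_scalar (2*m) (\<sigma> i) (\<sigma> j) = a i j" using sg i j by (simp add: Z2_scalar_def a_def)
    then show "\<phi> i j = (-1) ^ Z2_scalar (2*m) (\<sigma> i) (\<sigma> j)"
    proof -
      have "\<phi> i j = 1 \<or> \<phi> i j = -1" using assms(2) i j by auto
      then show ?thesis using \<open>Z2_scalar (2*m) (\<sigma> i) (\<sigma> j) = a i j\<close>
        by (auto simp: a_def)
    qed
  qed
qed

end
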